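(* Consider the Gumbel-max watermark model of the context. If, almost surely, $\mathbf{P}_t\in\mathcal{P}_{\Delta_n}$, and $n$ is large enough that $\Delta_n<0.5$, then almost surely $\mathbb{E}_{Y\sim U(0,1)}\big(\bar f_{1,t}(Y)-1\big)^2\ge c\,\Delta_n$, where $c>0$ is a universal constant.
   Context: $\mathcal{W}$ is a finite vocabulary; $\mathcal{P}_\Delta=\{\mathbf{P}:\max_wP_w\le1-\Delta\}$. For a probability vector $\mathbf{P}$, $f_{1,\mathbf{P}}(r)=\sum_{w:P_w>0}r^{1/P_w-1}$ (density of the CDF $\sum_wP_wr^{1/P_w}$ on $[0,1]$). Watermark model: at step $t$ a random next-token distribution $\mathbf{P}_t$ is produced and a pivotal statistic $Y_t$ is observed (Gumbel-max scheme: $\xi_t=(U_{t,w})_w$ i.i.d. $U(0,1)$, token $w_t$, $Y_t=U_{t,w_t}$). With $\mathcal{G}_{t-1}=\sigma(Y_1,\dots,Y_{t-1})$, define $\bar f_{1,t}(y)=\mathbb{E}_1[f_{1,\mathbf{P}_t}(y)\mid\mathcal{G}_{t-1}]$, where the conditional expectation is over $\mathbf{P}_t$ under the watermark model; in $\mathbb{E}_{Y\sim U(0,1)}$, $\bar f_{1,t}$ is held fixed and only $Y$ is integrated. *)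

theory Defs
  imports "HOL-Probability.Probability"
begin

text \<open>Vocabulary: a finite set W of token indices (coded as naturals, so that
 the constant can be quantified uniformly over all finite vocabularies).\<close>

definition prob_vec :: "nat set \<Rightarrow> (nat \<Rightarrow> real) \<Rightarrow> bool" where
  "prob_vec W P \<longleftrightarrow> (\<forall>w. 0 \<le> P w) \<and> (\<forall>w. w \<notin> W \<longrightarrow> P w = 0) \<and> sum P W = 1"

definition PDelta :: "nat set \<Rightarrow> real \<Rightarrow> (nat \<Rightarrow> real) set" where
  "PDelta W \<Delta> = {P. prob_vec W P \<and> (\<forall>w\<in>W. P w \<le> 1 - \<Delta>)}"

definition f1 :: "nat set \<Rightarrow> (nat \<Rightarrow> real) \<Rightarrow> real \<Rightarrow> real" where
  "f1 W P r = (\<Sum>w\<in>{w\<in>W. 0 < P w}. r powr (1 / P w - 1))"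

text \<open>Mixture of f_{1,P} over a (conditional) law mu of the random distribution P_t.\<close>
definition fbar :: "nat set \<Rightarrow> (nat \<Rightarrow> real) measure \<Rightarrow> real \<Rightarrow> real" where
  "fbar W \<mu> y = (\<integral>P. f1 W P y \<partial>\<mu>)"

end

theory Submission
  imports Defs
begin

lemma unif_int:
  fixes g :: "real \<Rightarrow> real"
  assumes [measurable]: "g \<in> borel_measurable borel"
  shows "integral\<^sup>L (uniform_measure lborel {0<..<1::real}) g = (\<integral>x. indicator {0<..<1} x * g x \<partial>lborel)"
proof -
  have "uniform_measure lborel {0<..<1::real} = density lborel (\<lambda>x. ennreal (indicator {0<..<1::real} x))"
    unfolding uniform_measure_def by (intro arg_cong[where f="density lborel"] ext) (simp split: split_indicator)
  then show ?thesis by (simp add: integral_density)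
qed

lemma powr_int:
  fixes a k :: real
  assumes "0 < a" "a \<le> 1" "0 \<le> k"
  shows "(LINT y:{a<..<1}|lborel. y powr k) = (1 - a powr (k+1)) / (k+1)"
proof -
  have "(LBINT y=ereal a..ereal 1. y powr k) = (\<lambda>y. y powr (k+1) / (k+1)) 1 - (\<lambda>y. y powr (k+1) / (k+1)) a"
  proof (rule interval_integral_FTC_finite)
    show "continuous_on {min a 1..max a 1} (\<lambda>y. y powr k)"
      using assms by (intro continuous_intros) auto
    fix x assume "min a 1 \<le> x" "x \<le> max a 1"
    then have x: "0 < x" using assms by auto
    have "((\<lambda>y. y powr (k+1) / (k+1)) has_real_derivative ((k+1) * x powr (k+1-1)) / (k+1)) (at x)"
      by (intro DERIV_cdivide has_real_derivative_powr x)
    then show "((\<lambda>y. y powr (k+1) / (k+1)) has_vector_derivative x powr k) (at x within {min a 1..max a 1})"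
      using assms by (auto simp: has_real_derivative_iff_has_vector_derivative[symmetric] intro: has_field_derivative_at_within)
  qed
  moreover have "(LBINT y=ereal a..ereal 1. y powr k) = (LINT y:{a<..<1}|lborel. y powr k)"
  proof -
    have "{x. ereal a < ereal x \<and> ereal x < ereal 1} = {a<..<1}" by auto
    then show ?thesis using assms by (simp add: interval_lebesgue_integral_def einterval_def)
  qed
  ultimately show ?thesis by (simp add: diff_divide_distrib)
qed


lemma powr_bound:
  fixes p d :: real
  assumes "0 < p" "0 < d" "d < 1"
  shows "(1 - d) powr (1/p) \<le> p / (p + d)"
proof -
  have "(1 - d) powr (1/p) = exp (ln (1-d) / p)"
    using assms by (simp add: powr_def)
  also have "\<dots> \<le> exp (- d / p)"
    using assms ln_le_minus_one[of "1-d"] divide_right_mono[of "ln (1-d)" "-d" p] by simp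
  also have "\<dots> = 1 / exp (d / p)" by (simp add: exp_minus field_simps)
  also have "\<dots> \<le> 1 / (1 + d / p)"
  proof -
    have "0 < d/p" using assms by simp
    then show ?thesis using exp_ge_add_one_self[of "d/p"] by (intro divide_left_mono) (auto intro: mult_pos_pos)
  qed
  also have "\<dots> = p / (p + d)" using assms by (simp add: field_simps)
  finally show ?thesis .
qed

lemma sum_bound:
  fixes P :: "nat \<Rightarrow> real" and \<Delta> :: real
  assumes "finite W" "P \<in> PDelta W \<Delta>" "0 < \<Delta>" "\<Delta> < 1/2"
  shows "(\<Sum>w\<in>W. P w / (P w + \<Delta>/2)) \<ge> 7/6"
proof -
  define d where "d = \<Delta>/2"
  have d: "0 < d" "d < 1/4" using assms by (auto simp: d_def)
  have nn: "\<And>w. 0 \<le> P w" and s1: "sum P W = 1" and le: "\<And>w. w \<in> W \<Longrightarrow> P w \<le> 1 - \<Delta>"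
    using assms(2) by (auto simp: PDelta_def prob_vec_def)
  have "W \<noteq> {}" using s1 by auto
  obtain w0 where w0: "w0 \<in> W" "\<And>w. w \<in> W \<Longrightarrow> P w \<le> P w0"
    using Max_in[of "P ` W"] Max_ge[of "P ` W"] assms(1) \<open>W \<noteq> {}\<close> by fastforce
  define m where "m = P w0"
  show ?thesis
  proof (cases "m < 1/2")
    case True
    have "(\<Sum>w\<in>W. P w / (1/2 + d)) \<le> (\<Sum>w\<in>W. P w / (P w + d))"
    proof (rule sum_mono)
      fix w assume "w \<in> W"
      then have "P w + d \<le> 1/2 + d" using w0 True m_def by fastforce
      then show "P w / (1/2 + d) \<le> P w / (P w + d)"
        using nn[of w] d by (intro divide_left_mono) auto
    qed
    moreover have "(\<Sum>w\<in>W. P w / (1/2 + d)) = 1 / (1/2 + d)"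
      using s1 by (simp add: sum_divide_distrib[symmetric])
    moreover have "1 / (1/2 + d) \<ge> 7/6" using d by (simp add: field_simps)
    ultimately show ?thesis by (simp add: d_def)
  next
    case False
    define y where "y = 1 - m"
    have sW: "sum P (W - {w0}) = y"
      using s1 sum.remove[OF assms(1) w0(1), of P] by (simp add: y_def m_def)
    have ley: "P w \<le> y" if "w \<in> W - {w0}" for w
      using member_le_sum[of w "W - {w0}" P] that nn assms(1) sW by auto
    have y2: "2*d \<le> y" using le[OF w0(1)] by (simp add: y_def m_def d_def)
    have yh: "y \<le> 1/2" using False y_def by simp
    have "(\<Sum>w\<in>W - {w0}. P w / (y + d)) \<le> (\<Sum>w\<in>W - {w0}. P w / (P w + d))"
    proof (rule sum_mono)
      fix w assume "w \<in> W - {w0}"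
      then show "P w / (y + d) \<le> P w / (P w + d)"
        using ley nn[of w] d y2 by (intro divide_left_mono) auto
    qed
    moreover have "(\<Sum>w\<in>W - {w0}. P w / (y + d)) = y / (y + d)"
      using sW by (simp add: sum_divide_distrib[symmetric])
    moreover have "(\<Sum>w\<in>W. P w / (P w + d)) = m / (m + d) + (\<Sum>w\<in>W - {w0}. P w / (P w + d))"
      using sum.remove[OF assms(1) w0(1)] m_def by simp
    moreover have "m / (m + d) + y / (y + d) \<ge> 7/6"
    proof -
      have m: "m = 1 - y" by (simp add: y_def)
      have "m / (m + d) + y / (y + d) - 1 = (m*y - d*d) / ((m+d)*(y+d))"
      proof -
        have "m + d > 0" "y + d > 0" using d y2 m yh by auto
        then show ?thesis by (simp add: divide_simps) (simp add: algebra_simps)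
      qed
      also have "\<dots> \<ge> 1/6"
      proof -
        have pos: "(m+d)*(y+d) > 0" using d y2 yh m by auto
        have "(m+d)*(y+d) \<le> 6*(m*y - d*d)"
        proof -
          have f1: "(m+d)*(y+d) \<le> (5/4)*(3/2*y)" using d y2 yh m
            by (intro mult_mono) auto
          have f2: "d*d \<le> y*y/4"
          proof -
            have "(2*d)*(2*d) \<le> y*y" using d y2 by (intro mult_mono) auto
            moreover have "(2*d)*(2*d) = 4*(d*d)" by simp
            ultimately show ?thesis by linarith
          qed
          have f3: "y*y \<le> y*(1/2)" using yh y2 d by (intro mult_left_mono) auto
          have f4: "(1/2)*y \<le> m*y" using yh m y2 d by (intro mult_right_mono) auto
          have r: "\<And>L Q R S. L \<le> 5/4*(3/2*y) \<Longrightarrow> Q \<le> R/4 \<Longrightarrow> R \<le> y*(1/2) \<Longrightarrow> 1/2*y \<le> S \<Longrightarrow> 0 \<le> y \<Longrightarrow> L \<le> 6*(S - Q)"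
            by (simp add: field_simps)
          have "0 \<le> y" using y2 d by simp
          then show ?thesis by (rule r[OF f1 f2 f3 f4])
        qed
        then show ?thesis using pos by (simp add: le_divide_eq)
      qed
      finally show ?thesis by simp
    qed
    ultimately have "(\<Sum>w\<in>W. P w / (P w + d)) \<ge> 7/6" by linarith
    then show ?thesis by (simp add: d_def)
  qed
qed


lemma main_bound:
  fixes W :: "nat set" and \<mu> :: "(nat \<Rightarrow> real) measure" and \<Delta> :: real
  assumes fin: "finite W" and ps: "prob_space \<mu>"
    and sets_mu: "sets \<mu> = sets (Pi\<^sub>M UNIV (\<lambda>_. borel))"
    and ae: "AE P in \<mu>. P \<in> PDelta W \<Delta>" and D: "0 < \<Delta>" "\<Delta> < 1/2"
  shows "(\<integral>y. (fbar W \<mu> y - 1)\<^sup>2 \<partial>(uniform_measure lborel {0<..<1::real})) \<ge> \<Delta>/72"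
proof -
  interpret mu: prob_space \<mu> by fact
  define N where "N = uniform_measure lborel {0<..<1::real}"
  interpret N: prob_space N unfolding N_def by (rule prob_space_uniform_measure) auto
  interpret NM: pair_prob_space N \<mu>
    by (simp add: pair_prob_space_def pair_sigma_finite_def N.prob_space_axioms mu.prob_space_axioms
        N.sigma_finite_measure_axioms mu.sigma_finite_measure_axioms)
  have sets_N[measurable_cong]: "sets N = sets borel" by (simp add: N_def)
  have [measurable_cong]: "sets \<mu> = sets (Pi\<^sub>M UNIV (\<lambda>_. borel::real measure))" by (fact sets_mu)
  define d where "d = \<Delta>/2"
  define a where "a = 1 - d"
  define A where "A = {a<..<1::real}"
  have d: "0 < d" "d < 1/4" using D by (auto simp: d_def)
  have a: "0 < a" "a < 1" using d by (auto simp: a_def)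
  have A_sub: "A \<subseteq> {0<..<1}" using a by (auto simp: A_def)
  define G where "G P y = (\<Sum>w\<in>W. if 0 < P w \<and> P w \<le> 1 then y powr (1 / P w - 1) else 0)"
    for P :: "nat \<Rightarrow> real" and y :: real
  have G_meas1[measurable]: "(\<lambda>(y, P). G P y) \<in> borel_measurable (N \<Otimes>\<^sub>M \<mu>)"
    unfolding G_def by measurable
  have G_meas2[measurable]: "(\<lambda>(P, y). G P y) \<in> borel_measurable (\<mu> \<Otimes>\<^sub>M N)"
    unfolding G_def by measurable
  have G_bound: "0 \<le> G P y \<and> G P y \<le> real (card W)" if "0 \<le> y" "y \<le> 1" for P y
  proof -
    have l: "\<And>w. 0 \<le> (if 0 < P w \<and> P w \<le> 1 then y powr (1 / P w - 1) else 0)" by simp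
    have u: "\<And>w. (if 0 < P w \<and> P w \<le> 1 then y powr (1 / P w - 1) else 0) \<le> 1"
      using that by (auto intro!: powr_le1 simp: field_simps)
    have "(\<Sum>w\<in>W. if 0 < P w \<and> P w \<le> 1 then y powr (1 / P w - 1) else 0) \<le> of_nat (card W) * 1"
      by (rule sum_bounded_above) (rule u)
    moreover have "0 \<le> (\<Sum>w\<in>W. if 0 < P w \<and> P w \<le> 1 then y powr (1 / P w - 1) else 0)"
      by (rule sum_nonneg) (rule l)
    ultimately show ?thesis unfolding G_def by simp
  qed
  have f1_eq: "f1 W P y = (\<Sum>w\<in>W. if 0 < P w then y powr (1 / P w - 1) else 0)" for P y
    unfolding f1_def using fin by (simp add: sum.inter_filter)
  have f1G: "f1 W P y = G P y" if "P \<in> PDelta W \<Delta>" for P y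
  proof -
    have "\<And>w. w \<in> W \<Longrightarrow> P w \<le> 1" using that D by (auto simp: PDelta_def)
    then show ?thesis unfolding f1_eq G_def by (intro sum.cong) auto
  qed
  define H where "H y = (\<integral>P. G P y \<partial>\<mu>)" for y
  have fbarH: "fbar W \<mu> y = H y" for y
    unfolding fbar_def H_def
  proof (rule integral_cong_AE)
    show "(\<lambda>P. f1 W P y) \<in> borel_measurable \<mu>" unfolding f1_eq by measurable
    show "(\<lambda>P. G P y) \<in> borel_measurable \<mu>" unfolding G_def by measurable
    show "AE P in \<mu>. f1 W P y = G P y" using ae by eventually_elim (rule f1G)
  qed
  have H_meas[measurable]: "H \<in> borel_measurable N"
    unfolding H_def using G_meas1 by (intro mu.borel_measurable_lebesgue_integral) simp
  have H_bound: "0 \<le> H y \<and> H y \<le> real (card W)" if "0 \<le> y" "y \<le> 1" for y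
  proof -
    have int: "integrable \<mu> (\<lambda>P. G P y)"
      using G_bound[OF that] by (intro mu.integrable_const_bound[where B="real (card W)"]) (auto simp: G_def)
    show ?thesis unfolding H_def using G_bound[OF that]
      by (auto intro!: integral_nonneg mu.integral_le_const int)
  qed
  have AE_N: "AE y in N. 0 < y \<and> y < 1"
    unfolding N_def by (rule AE_uniform_measureI) auto

  have inner: "(\<integral>y. G P y * indicator A y \<partial>N) \<ge> 7/6 * d" if P: "P \<in> PDelta W \<Delta>" for P
  proof -
    have nn: "\<And>w. 0 \<le> P w" and le1: "\<And>w. w \<in> W \<Longrightarrow> P w \<le> 1"
      using P D by (auto simp: PDelta_def prob_vec_def)
    define T where "T w y = (if 0 < P w \<and> P w \<le> 1 then y powr (1 / P w - 1) else 0)" for w y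
    have int_w: "integrable lborel (\<lambda>y. indicator A y * T w y)" for w
    proof (cases "0 < P w \<and> P w \<le> 1")
      case True
      have "integrable lborel (\<lambda>y. indicator {a..1} y *\<^sub>R (y powr (1 / P w - 1)))"
        using a by (intro borel_integrable_compact) (auto intro!: continuous_intros)
      then have "set_integrable lborel {a..1} (\<lambda>y. y powr (1 / P w - 1))"
        by (simp add: set_integrable_def)
      then have "set_integrable lborel A (\<lambda>y. y powr (1 / P w - 1))"
        by (rule set_integrable_subset) (auto simp: A_def)
      then show ?thesis using True by (simp add: set_integrable_def T_def)
    next
      case False
      then have "\<And>y. T w y = 0" by (auto simp: T_def)
      then show ?thesis by simp
    qed
    have val_w: "(\<integral>y. indicator A y * T w y \<partial>lborel) \<ge> d * (P w / (P w + d))" if w: "w \<in> W" for w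
    proof (cases "0 < P w")
      case True
      have p1: "P w \<le> 1" using le1 w .
      have k: "0 \<le> 1 / P w - 1" using True p1 by (simp add: field_simps)
      have "(\<integral>y. indicator A y * T w y \<partial>lborel) = (LINT y:A|lborel. y powr (1 / P w - 1))"
        using True p1 by (simp add: T_def set_lebesgue_integral_def)
      also have "\<dots> = (1 - a powr (1 / P w - 1 + 1)) / (1 / P w - 1 + 1)"
        unfolding A_def using a k by (intro powr_int) auto
      also have "\<dots> = P w * (1 - a powr (1 / P w))"
        using True by simp
      also have "\<dots> \<ge> P w * (1 - P w / (P w + d))"
        using powr_bound[of "P w" d] True d by (intro mult_left_mono) (auto simp: a_def)
      finally show ?thesis using True d by (simp add: field_simps)
    next
      case False
      then have "P w = 0" using nn[of w] by simp
      then show ?thesis by (simp add: T_def)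
    qed
    have meas: "(\<lambda>y. G P y * indicator A y) \<in> borel_measurable borel"
      unfolding G_def A_def by measurable
    have "(\<integral>y. G P y * indicator A y \<partial>N) = (\<integral>y. indicator {0<..<1} y * (G P y * indicator A y) \<partial>lborel)"
      unfolding N_def by (rule unif_int[OF meas])
    also have "\<dots> = (\<integral>y. (\<Sum>w\<in>W. indicator A y * T w y) \<partial>lborel)"
      using A_sub by (intro Bochner_Integration.integral_cong refl)
         (auto simp: G_def T_def sum_distrib_left split: split_indicator)
    also have "\<dots> = (\<Sum>w\<in>W. (\<integral>y. indicator A y * T w y \<partial>lborel))"
      by (rule Bochner_Integration.integral_sum) (rule int_w)
    also have "\<dots> \<ge> (\<Sum>w\<in>W. d * (P w / (P w + d)))"
      by (rule sum_mono) (rule val_w)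
    moreover have "(\<Sum>w\<in>W. d * (P w / (P w + d))) \<ge> d * (7/6)"
    proof -
      have "(\<Sum>w\<in>W. d * (P w / (P w + d))) = d * (\<Sum>w\<in>W. P w / (P w + d))"
        by (simp add: sum_distrib_left)
      moreover have "(\<Sum>w\<in>W. P w / (P w + d)) \<ge> 7/6"
        using sum_bound[OF fin P D] by (simp add: d_def)
      ultimately show ?thesis using d by (simp add: mult_left_mono)
    qed
    ultimately show ?thesis by simp
  qed
  have GA_bound: "\<bar>G P y * indicator A y\<bar> \<le> real (card W)" for P y
  proof (cases "y \<in> A")
    case True
    then have "0 \<le> y" "y \<le> 1" using A_sub by auto
    then show ?thesis using G_bound[of y P] True by simp
  qed simp
  have GA_meas1[measurable]: "(\<lambda>(y, P). G P y * indicator A y) \<in> borel_measurable (N \<Otimes>\<^sub>M \<mu>)"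
    unfolding G_def A_def by measurable
  have GA_meas2[measurable]: "(\<lambda>(P, y). G P y * indicator A y) \<in> borel_measurable (\<mu> \<Otimes>\<^sub>M N)"
    unfolding G_def A_def by measurable
  have int_prod: "integrable (N \<Otimes>\<^sub>M \<mu>) (\<lambda>(y, P). G P y * indicator A y)"
    by (rule NM.P.integrable_const_bound[where B="real (card W)"]) (auto simp: GA_bound)
  define X where "X P = (\<integral>y. G P y * indicator A y \<partial>N)" for P
  have X_meas: "X \<in> borel_measurable \<mu>"
    unfolding X_def using GA_meas2 by (intro N.borel_measurable_lebesgue_integral) simp
  have X_bound: "\<bar>X P\<bar> \<le> real (card W)" for P
  proof -
    have "(\<lambda>y. G P y * indicator A y) \<in> borel_measurable N"
      unfolding G_def A_def by measurable
    then have int: "integrable N (\<lambda>y. G P y * indicator A y)"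
      by (intro N.integrable_const_bound[where B="real (card W)"]) (auto simp: GA_bound)
    have "\<bar>X P\<bar> \<le> (\<integral>y. \<bar>G P y * indicator A y\<bar> \<partial>N)"
      unfolding X_def by (rule integral_abs_bound)
    also have "\<dots> \<le> real (card W)"
      using int GA_bound by (intro N.integral_le_const) auto
    finally show ?thesis .
  qed
  have X_int: "integrable \<mu> X"
    by (rule mu.integrable_const_bound[where B="real (card W)"]) (auto simp: X_bound X_meas)
  have HA_meas[measurable]: "(\<lambda>y. H y * indicator A y) \<in> borel_measurable N"
    unfolding A_def by measurable
  have K: "(\<integral>y. H y * indicator A y \<partial>N) \<ge> 7/6 * d"
  proof -
    have "(\<integral>y. H y * indicator A y \<partial>N) = (\<integral>y. (\<integral>P. G P y * indicator A y \<partial>\<mu>) \<partial>N)"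
      by (simp add: H_def)
    also have "\<dots> = (\<integral>P. (\<integral>y. G P y * indicator A y \<partial>N) \<partial>\<mu>)"
      using NM.Fubini_integral[of "\<lambda>y P. G P y * indicator A y"] int_prod by simp
    also have "\<dots> \<ge> 7/6 * d"
      using X_int ae inner unfolding X_def by (intro mu.integral_ge_const) (auto elim: AE_mp)
    finally show ?thesis .
  qed
  have IA: "(\<integral>y. indicator A y \<partial>N) = d"
  proof -
    have "(\<integral>y. indicator A y \<partial>N) = (\<integral>y. indicator {0<..<1} y * indicator A y \<partial>lborel :: real)"
      unfolding N_def by (rule unif_int) (simp add: A_def)
    also have "\<dots> = (\<integral>y. indicator A y \<partial>lborel)"
      using A_sub by (intro Bochner_Integration.integral_cong refl) (auto split: split_indicator)
    also have "\<dots> = d" using d by (simp add: A_def a_def)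
    finally show ?thesis .
  qed
  have HA_int: "integrable N (\<lambda>y. H y * indicator A y)"
  proof (rule N.integrable_const_bound[where B="real (card W)"])
    show "AE y in N. norm (H y * indicator A y) \<le> real (card W)"
      using AE_N by eventually_elim (use H_bound in \<open>auto split: split_indicator\<close>)
  qed simp
  have A_int: "integrable N (\<lambda>y. indicator A y :: real)"
    by (rule N.integrable_const_bound[where B=1]) (auto simp: A_def split: split_indicator)
  have sq_int: "integrable N (\<lambda>y. (H y - 1)\<^sup>2)"
  proof (rule N.integrable_const_bound[where B="(real (card W) + 1)\<^sup>2"])
    show "AE y in N. norm ((H y - 1)\<^sup>2) \<le> (real (card W) + 1)\<^sup>2"
      using AE_N
    proof eventually_elim
      case (elim y)
      then have "\<bar>H y - 1\<bar> \<le> real (card W) + 1" using H_bound[of y] by auto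
      then have "\<bar>H y - 1\<bar>\<^sup>2 \<le> (real (card W) + 1)\<^sup>2" by (rule power_mono) simp
      then show ?case by simp
    qed
  qed simp
  have "(\<integral>y. (fbar W \<mu> y - 1)\<^sup>2 \<partial>N) = (\<integral>y. (H y - 1)\<^sup>2 \<partial>N)"
    by (simp add: fbarH)
  also have "\<dots> \<ge> (\<integral>y. (1/3) * (H y * indicator A y) - (13/36) * indicator A y \<partial>N)"
  proof (rule integral_mono)
    show "integrable N (\<lambda>y. (1/3) * (H y * indicator A y) - (13/36) * indicator A y)"
      using HA_int A_int by auto
    show "integrable N (\<lambda>y. (H y - 1)\<^sup>2)" by (rule sq_int)
    fix y
    show "(1/3) * (H y * indicator A y) - (13/36) * indicator A y \<le> (H y - 1)\<^sup>2"
    proof (cases "y \<in> A")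
      case True
      have "0 \<le> (H y - 1 - 1/6)\<^sup>2" by simp
      then show ?thesis using True by (simp add: power2_eq_square algebra_simps)
    qed simp
  qed
  also have "(\<integral>y. (1/3) * (H y * indicator A y) - (13/36) * indicator A y \<partial>N)
      = (1/3) * (\<integral>y. H y * indicator A y \<partial>N) - (13/36) * d"
    using HA_int A_int IA by simp
  finally have "(\<integral>y. (fbar W \<mu> y - 1)\<^sup>2 \<partial>N) \<ge> (1/3) * (\<integral>y. H y * indicator A y \<partial>N) - (13/36) * d" .
  then show ?thesis using K by (simp add: N_def d_def)
qed

theorem lemmaA5:
  shows "\<exists>c>0. \<forall>(W::nat set) (\<mu>::(nat \<Rightarrow> real) measure) (\<Delta>::real).
     finite W \<longrightarrow> prob_space \<mu> \<longrightarrow> sets \<mu> = sets (Pi\<^sub>M UNIV (\<lambda>_. borel)) \<longrightarrow>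
     (AE P in \<mu>. P \<in> PDelta W \<Delta>) \<longrightarrow> \<Delta> < 1/2 \<longrightarrow>
     (\<integral>y. (fbar W \<mu> y - 1)\<^sup>2 \<partial>(uniform_measure lborel {0<..<1::real})) \<ge> c * \<Delta>"
proof (rule exI[of _ "1/72"], intro conjI allI impI)
  show "(0::real) < 1/72" by simp
  fix W :: "nat set" and \<mu> :: "(nat \<Rightarrow> real) measure" and \<Delta> :: real
  assume fin: "finite W" and ps: "prob_space \<mu>" and sets_mu: "sets \<mu> = sets (Pi\<^sub>M UNIV (\<lambda>_. borel))"
    and ae: "AE P in \<mu>. P \<in> PDelta W \<Delta>" and D: "\<Delta> < 1/2"
  show "(\<integral>y. (fbar W \<mu> y - 1)\<^sup>2 \<partial>(uniform_measure lborel {0<..<1::real})) \<ge> 1/72 * \<Delta>"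
  proof (cases "0 < \<Delta>")
    case True
    then show ?thesis using main_bound[OF fin ps sets_mu ae True D] by simp
  next
    case False
    have "0 \<le> (\<integral>y. (fbar W \<mu> y - 1)\<^sup>2 \<partial>(uniform_measure lborel {0<..<1::real}))"
      by (rule Bochner_Integration.integral_nonneg) simp
    then show ?thesis using False by linarith
  qed
qed

end
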